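(* Let $G$ be a finite subgroup of $O(d)$ and $p\ge1$ an integer such that every $G$-invariant homogeneous polynomial of degree $2p$ on $\mathbb{R}^d$ is a scalar multiple of $|x|^{2p}$. Then there is a homogeneous symmetric polynomial $F_p$ of degree $p$ in $d$ variables such that for every real symmetric $d\times d$ matrix $M$ and every $y\in\mathbb{R}^d$, $$\frac{1}{|G|}\sum_{U\in G}\langle M,P_{Uy}\rangle_{HS}^p=F_p(\sigma(M))\,|P_y|_{HS}^p=F_p(\sigma(M))\,|y|^{2p},$$ where $\sigma(M)$ is the multiset of eigenvalues of $M$ (with multiplicity).
   Context: For $y\in\mathbb{R}^d$, $P_y=yy^\dagger$ ($\dagger$ = transpose). $\langle A,B\rangle_{HS}=\operatorname{tr}(A^\dagger B)$ is the Hilbert–Schmidt inner product and $|A|_{HS}=\langle A,A\rangle_{HS}^{1/2}$. *)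

theory Defs
  imports "HOL-Analysis.Analysis"
begin

definition proj :: "real^'n \<Rightarrow> real^'n^'n" where
  "proj y = (\<chi> i j. y $ i * y $ j)"

definition hs_inner :: "real^'n^'n \<Rightarrow> real^'n^'n \<Rightarrow> real" where
  "hs_inner A B = trace (transpose A ** B)"

definition hs_norm :: "real^'n^'n \<Rightarrow> real" where
  "hs_norm A = sqrt (hs_inner A A)"

definition hom_poly :: "nat \<Rightarrow> (real^'n \<Rightarrow> real) \<Rightarrow> bool" where
  "hom_poly k f \<longleftrightarrow> (\<exists>c :: ('n \<Rightarrow> nat) \<Rightarrow> real.
     \<forall>x. f x = (\<Sum>\<alpha>\<in>{\<alpha>::'n \<Rightarrow> nat. sum \<alpha> UNIV = k}. c \<alpha> * (\<Prod>i\<in>UNIV. (x $ i) ^ (\<alpha> i))))"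

definition symmetric_fun :: "(real^'n \<Rightarrow> real) \<Rightarrow> bool" where
  "symmetric_fun F \<longleftrightarrow> (\<forall>\<pi> x. \<pi> permutes (UNIV::'n set) \<longrightarrow> F (\<chi> i. x $ \<pi> i) = F x)"

text \<open>lam lists the eigenvalues of M with algebraic multiplicity:
  the characteristic polynomial det(t I - M) factors as prod_i (t - lam_i).\<close>
definition eigen_list :: "real^'n \<Rightarrow> real^'n^'n \<Rightarrow> bool" where
  "eigen_list lam M \<longleftrightarrow> (\<forall>t. det (t *\<^sub>R mat 1 - M) = (\<Prod>i\<in>UNIV. t - lam $ i))"

definition symmetric_mat :: "real^'n^'n \<Rightarrow> bool" where
  "symmetric_mat M \<longleftrightarrow> transpose M = M"

end

theory Submission
  imports Defs "HOL-Computational_Algebra.Polynomial"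
begin



abbreviation Sdeg :: "nat \<Rightarrow> ('n::finite \<Rightarrow> nat) set" where
  "Sdeg k \<equiv> {\<alpha>::'n \<Rightarrow> nat. sum \<alpha> UNIV = k}"

lemma finite_Sdeg: "finite (Sdeg k :: ('n::finite \<Rightarrow> nat) set)"
proof -
  have "Sdeg k \<subseteq> PiE (UNIV::'n set) (\<lambda>_. {..k})"
    by (auto simp: PiE_UNIV_domain intro: member_le_sum)
  moreover have "finite (PiE (UNIV::'n set) (\<lambda>_. {..k}))"
    by (rule finite_PiE) auto
  ultimately show ?thesis by (rule finite_subset)
qed

lemma hp_add: "hom_poly k f \<Longrightarrow> hom_poly k g \<Longrightarrow> hom_poly k (\<lambda>x. f x + g x)"
  unfolding hom_poly_def
proof (elim exE)
  fix c d assume c: "\<forall>x. f x = (\<Sum>\<alpha>\<in>Sdeg k. c \<alpha> * (\<Prod>i\<in>UNIV. x $ i ^ \<alpha> i))"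
    and d: "\<forall>x. g x = (\<Sum>\<alpha>\<in>Sdeg k. d \<alpha> * (\<Prod>i\<in>UNIV. x $ i ^ \<alpha> i))"
  show "\<exists>e. \<forall>x. f x + g x = (\<Sum>\<alpha>\<in>Sdeg k. e \<alpha> * (\<Prod>i\<in>UNIV. x $ i ^ \<alpha> i))"
    by (rule exI[of _ "\<lambda>\<alpha>. c \<alpha> + d \<alpha>"]) (simp add: c d distrib_right sum.distrib)
qed

lemma hp_scale: "hom_poly k f \<Longrightarrow> hom_poly k (\<lambda>x. a * f x)"
  unfolding hom_poly_def
proof (elim exE)
  fix c assume c: "\<forall>x. f x = (\<Sum>\<alpha>\<in>Sdeg k. c \<alpha> * (\<Prod>i\<in>UNIV. x $ i ^ \<alpha> i))"
  show "\<exists>e. \<forall>x. a * f x = (\<Sum>\<alpha>\<in>Sdeg k. e \<alpha> * (\<Prod>i\<in>UNIV. x $ i ^ \<alpha> i))"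
    by (rule exI[of _ "\<lambda>\<alpha>. a * c \<alpha>"]) (simp add: c sum_distrib_left mult.assoc)
qed

lemma hp_zero: "hom_poly k (\<lambda>x. 0)"
  unfolding hom_poly_def by (rule exI[of _ "\<lambda>_. 0"]) simp

lemma hp_sum: "finite I \<Longrightarrow> (\<And>i. i \<in> I \<Longrightarrow> hom_poly k (f i)) \<Longrightarrow> hom_poly k (\<lambda>x. \<Sum>i\<in>I. f i x)"
proof (induction I rule: finite_induct)
  case empty then show ?case by (simp add: hp_zero)
next
  case (insert j I) then show ?case by (simp add: hp_add)
qed

lemma hp_one: "hom_poly 0 (\<lambda>x. 1)"
  unfolding hom_poly_def
proof (rule exI[of _ "\<lambda>_. 1"], intro allI)
  fix x :: "real^'n"
  have "Sdeg 0 = {(\<lambda>_. 0)::'n\<Rightarrow>nat}" by (auto simp: fun_eq_iff)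
  then show "1 = (\<Sum>\<alpha>\<in>Sdeg 0. 1 * (\<Prod>i\<in>UNIV. x $ i ^ \<alpha> i))" by simp
qed

lemma hp_coord: "hom_poly 1 (\<lambda>x::real^'n. x $ j)"
  unfolding hom_poly_def
proof (rule exI[of _ "\<lambda>\<alpha>. if \<alpha> = (\<lambda>i. if i = j then 1 else 0) then 1 else 0"], intro allI)
  fix x :: "real^'n"
  let ?d = "(\<lambda>i. if i = j then 1 else 0)::'n \<Rightarrow> nat"
  have "?d \<in> Sdeg 1" by simp
  moreover have "(\<Prod>i\<in>UNIV. x $ i ^ ?d i) = x $ j"
    by (simp add: if_distrib prod.delta cong: if_cong)
  ultimately show "x $ j = (\<Sum>\<alpha>\<in>Sdeg 1. (if \<alpha> = ?d then 1 else 0) * (\<Prod>i\<in>UNIV. x $ i ^ \<alpha> i))"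
    by (simp add: if_distrib[of "\<lambda>t. t * _"] sum.delta[OF finite_Sdeg] cong: if_cong)
qed

lemma hp_mult:
  fixes f g :: "real^'n::finite \<Rightarrow> real"
  assumes "hom_poly a f" "hom_poly b g"
  shows "hom_poly (a + b) (\<lambda>x. f x * g x)"
proof -
  obtain c where c: "\<And>x. f x = (\<Sum>\<alpha>\<in>Sdeg a. c \<alpha> * (\<Prod>i\<in>UNIV. x $ i ^ \<alpha> i))"
    using assms(1) unfolding hom_poly_def by blast
  obtain d where d: "\<And>x. g x = (\<Sum>\<alpha>\<in>Sdeg b. d \<alpha> * (\<Prod>i\<in>UNIV. x $ i ^ \<alpha> i))"
    using assms(2) unfolding hom_poly_def by blast
  define P where "P = (Sdeg a \<times> Sdeg b :: (('n \<Rightarrow> nat) \<times> ('n \<Rightarrow> nat)) set)"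
  define s where "s = ((\<lambda>(\<alpha>,\<beta>). (\<lambda>i. \<alpha> i + \<beta> i)) :: (('n \<Rightarrow> nat) \<times> ('n \<Rightarrow> nat)) \<Rightarrow> ('n \<Rightarrow> nat))"
  define e where "e = (\<lambda>\<gamma>. \<Sum>q\<in>{q\<in>P. s q = \<gamma>}. c (fst q) * d (snd q))"
  have finP: "finite P" unfolding P_def using finite_Sdeg by blast
  have sP: "s ` P \<subseteq> Sdeg (a+b)"
    by (auto simp: P_def s_def sum.distrib)
  show ?thesis unfolding hom_poly_def
  proof (rule exI[of _ e], intro allI)
    fix x :: "real^'n"
    let ?m = "\<lambda>\<alpha>. (\<Prod>i\<in>UNIV. x $ i ^ \<alpha> i)"
    have "f x * g x = (\<Sum>q\<in>P. c (fst q) * d (snd q) * ?m (s q))"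
      unfolding c d sum_product P_def sum.cartesian_product
      by (rule sum.cong) (auto simp: s_def power_add prod.distrib)
    also have "\<dots> = (\<Sum>\<gamma>\<in>Sdeg (a+b). \<Sum>q\<in>{q\<in>P. s q = \<gamma>}. c (fst q) * d (snd q) * ?m (s q))"
      by (rule sum.group[symmetric, OF finP finite_Sdeg sP])
    also have "\<dots> = (\<Sum>\<gamma>\<in>Sdeg (a+b). e \<gamma> * ?m \<gamma>)"
      unfolding e_def sum_distrib_right by (rule sum.cong) auto
    finally show "f x * g x = (\<Sum>\<gamma>\<in>Sdeg (a+b). e \<gamma> * ?m \<gamma>)" .
  qed
qed

lemma hp_pow: "hom_poly k f \<Longrightarrow> hom_poly (k * m) (\<lambda>x. f x ^ m)"
proof (induction m)
  case 0 then show ?case by (simp add: hp_one)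
next
  case (Suc m)
  have "hom_poly (k * m + k) (\<lambda>x. f x ^ m * f x)" using hp_mult[OF Suc.IH[OF Suc.prems] Suc.prems] .
  then show ?case by (simp add: algebra_simps)
qed

lemma hp_lin: "hom_poly 1 (\<lambda>x::real^'n. \<Sum>i\<in>UNIV. a i * x $ i)"
  by (rule hp_sum, simp, rule hp_scale[OF hp_coord])




lemma matrix_inv_orth:
  fixes U :: "real^'n^'n"
  assumes "orthogonal_matrix U"
  shows "matrix_inv U = transpose U"
proof -
  have ex: "U ** transpose U = mat 1 \<and> transpose U ** U = mat 1"
    using assms by (simp add: orthogonal_matrix_def)
  have "U ** matrix_inv U = mat 1 \<and> matrix_inv U ** U = mat 1"
    unfolding matrix_inv_def by (rule someI[of _ "transpose U"]) (rule ex)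
  then have "transpose U ** (U ** matrix_inv U) = transpose U" by simp
  then show ?thesis using ex by (simp add: matrix_mul_assoc)
qed

lemma endo_sum:
  assumes "finite A" "h ` A \<subseteq> A" "inj_on h A"
  shows "(\<Sum>x\<in>A. g (h x)) = (\<Sum>x\<in>A. g x)"
proof -
  have "h ` A = A" using endo_inj_surj assms by blast
  then show ?thesis using sum.reindex[OF assms(3), of g] by simp
qed

locale grp =
  fixes G :: "(real^'n^'n) set"
  assumes finG: "finite G"
    and orth: "\<forall>U\<in>G. orthogonal_matrix U"
    and mult_closed: "\<forall>A\<in>G. \<forall>B\<in>G. A ** B \<in> G"
    and inv_closed: "\<forall>A\<in>G. matrix_inv A \<in> G"
begin

lemma transpose_in: "U \<in> G \<Longrightarrow> transpose U \<in> G"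
  using inv_closed orth matrix_inv_orth by metis

lemma sum_transpose: "(\<Sum>U\<in>G. g (transpose U)) = (\<Sum>U\<in>G. g U)"
  by (rule endo_sum[OF finG]) (auto intro: transpose_in inj_onI simp: transpose_transpose[symmetric])

lemma sum_right:
  assumes V: "V \<in> G"
  shows "(\<Sum>U\<in>G. g (U ** V)) = (\<Sum>U\<in>G. g U)"
proof (rule endo_sum[OF finG])
  show "(\<lambda>U. U ** V) ` G \<subseteq> G" using mult_closed V by auto
  have VV: "V ** transpose V = mat 1" using orth V by (simp add: orthogonal_matrix_def)
  show "inj_on (\<lambda>U. U ** V) G"
  proof (rule inj_onI)
    fix A B assume "A ** V = B ** V"
    then have "A ** V ** transpose V = B ** V ** transpose V" by simp
    then show "A = B" by (simp add: matrix_mul_assoc[symmetric] VV)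
  qed
qed

lemma sum_act:
  assumes V: "V \<in> G"
  shows "(\<Sum>U\<in>G. g (U *v (V *v y))) = (\<Sum>U\<in>G. g (U *v y))"
  using sum_right[OF V, of "\<lambda>U. g (U *v y)"] by (simp add: matrix_vector_mul_assoc)

definition A :: "nat \<Rightarrow> real^'n \<Rightarrow> real^'n \<Rightarrow> real" where
  "A N w y = (\<Sum>U\<in>G. (w \<bullet> (U *v y)) ^ N)"

lemma A_swap: "A N w y = A N y w"
proof -
  have "A N w y = (\<Sum>U\<in>G. (y \<bullet> (transpose U *v w)) ^ N)"
    unfolding A_def
  proof (rule sum.cong)
    fix U :: "real^'n^'n"
    have "w \<bullet> (U *v y) = (w v* U) \<bullet> y" by (simp add: dot_lmul_matrix)
    also have "\<dots> = y \<bullet> (transpose U *v w)" by (simp add: inner_commute)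
    finally show "(w \<bullet> (U *v y)) ^ N = (y \<bullet> (transpose U *v w)) ^ N" by simp
  qed simp
  also have "\<dots> = A N y w" unfolding A_def by (rule sum_transpose)
  finally show ?thesis .
qed

lemma A_inv: "V \<in> G \<Longrightarrow> A N w (V *v y) = A N w y"
  unfolding A_def by (rule sum_act)

lemma A_hp: "hom_poly N (A N w)"
proof -
  have "hom_poly N (\<lambda>y. \<Sum>U\<in>G. (w \<bullet> (U *v y)) ^ N)"
  proof (rule hp_sum[OF finG])
    fix U :: "real^'n^'n"
    have e: "w \<bullet> (U *v y) = (\<Sum>i\<in>UNIV. (\<Sum>k\<in>UNIV. w $ k * U $ k $ i) * y $ i)" for y
    proof -
      have "w \<bullet> (U *v y) = (\<Sum>k\<in>UNIV. \<Sum>i\<in>UNIV. w $ k * U $ k $ i * y $ i)"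
        by (simp add: inner_vec_def matrix_vector_mult_def sum_distrib_left mult.assoc)
      also have "\<dots> = (\<Sum>i\<in>UNIV. \<Sum>k\<in>UNIV. w $ k * U $ k $ i * y $ i)" by (rule sum.swap)
      also have "\<dots> = (\<Sum>i\<in>UNIV. (\<Sum>k\<in>UNIV. w $ k * U $ k $ i) * y $ i)"
        by (simp add: sum_distrib_right)
      finally show "w \<bullet> (U *v y) = (\<Sum>i\<in>UNIV. (\<Sum>k\<in>UNIV. w $ k * U $ k $ i) * y $ i)" .
    qed
    have "hom_poly (1 * N) (\<lambda>y. (w \<bullet> (U *v y)) ^ N)"
      unfolding e by (rule hp_pow[OF hp_lin])
    then show "hom_poly N (\<lambda>y. (w \<bullet> (U *v y)) ^ N)" by simp
  qed
  then show ?thesis unfolding A_def[abs_def] by simp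
qed

lemma K:
  assumes hyp: "\<forall>f. hom_poly N f \<and> (\<forall>U\<in>G. \<forall>x. f (U *v x) = f x)
                   \<longrightarrow> (\<exists>c. \<forall>x. f x = c * norm x ^ N)"
  shows "\<exists>\<kappa>. \<forall>w y. A N w y = \<kappa> * norm w ^ N * norm y ^ N"
proof -
  have "\<forall>w. \<exists>c. \<forall>y. A N w y = c * norm y ^ N"
    using hyp A_hp A_inv by blast
  then obtain c where c: "\<And>w y. A N w y = c w * norm y ^ N" by metis
  let ?e = "axis undefined 1 :: real^'n"
  have ne: "norm ?e = 1" by simp
  have "\<And>w. c w = c ?e * norm w ^ N"
    using c[of _ ?e] c[of ?e] A_swap ne by (metis mult_1 power_one mult.right_neutral)
  then show ?thesis using c by (metis mult.commute mult.left_commute)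
qed

end



definition Dp :: "(nat \<Rightarrow> real) \<Rightarrow> nat \<Rightarrow> real \<Rightarrow> nat \<Rightarrow> real" where
  "Dp l n c m = (\<Sum>S\<in>Pow {..<n}. (-1) ^ (n - card S) * (c + sum l S) ^ m)"

lemma Dp_expand: "Dp l n c m = (\<Sum>j\<le>m. of_nat (m choose j) * c ^ (m - j) * Dp l n 0 j)"
proof -
  have "Dp l n c m = (\<Sum>S\<in>Pow {..<n}. \<Sum>j\<le>m. (-1) ^ (n - card S) * (of_nat (m choose j) * c ^ (m - j) * (sum l S) ^ j))"
    unfolding Dp_def
  proof (rule sum.cong)
    fix S
    have "(c + sum l S)^m = (\<Sum>j\<le>m. of_nat (m choose j) * (sum l S)^j * c^(m-j))"
      by (subst add.commute) (rule binomial_ring)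
    then show "(-1) ^ (n - card S) * (c + sum l S) ^ m = (\<Sum>j\<le>m. (-1) ^ (n - card S) * (of_nat (m choose j) * c ^ (m - j) * (sum l S) ^ j))"
      by (simp add: sum_distrib_left mult.commute mult.left_commute)
  qed simp
  also have "\<dots> = (\<Sum>j\<le>m. \<Sum>S\<in>Pow {..<n}. (-1) ^ (n - card S) * (of_nat (m choose j) * c ^ (m - j) * (sum l S) ^ j))"
    by (rule sum.swap)
  also have "\<dots> = (\<Sum>j\<le>m. of_nat (m choose j) * c ^ (m - j) * Dp l n 0 j)"
    unfolding Dp_def by (simp add: sum_distrib_left mult.commute mult.left_commute)
  finally show ?thesis .
qed

lemma Dp_Suc: "Dp l (Suc n) c m = Dp l n (c + l n) m - Dp l n c m"
proof -
  have P: "Pow {..<Suc n} = Pow {..<n} \<union> insert n ` Pow {..<n}"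
    by (simp add: lessThan_Suc Pow_insert)
  have disj: "Pow {..<n} \<inter> insert n ` Pow {..<n} = {}" by auto
  have inj: "inj_on (insert n) (Pow {..<n})"
    by (rule inj_onI) (metis Pow_iff insert_ident lessThan_iff less_irrefl subsetD)
  have fin: "finite (Pow {..<n})" by simp
  have cardle: "S \<in> Pow {..<n} \<Longrightarrow> card S \<le> n" for S
    by (metis PowD card_lessThan card_mono finite_lessThan)
  have "Dp l (Suc n) c m = (\<Sum>S\<in>Pow {..<n}. (-1) ^ (Suc n - card S) * (c + sum l S) ^ m)
      + (\<Sum>S\<in>Pow {..<n}. (-1) ^ (Suc n - card (insert n S)) * (c + sum l (insert n S)) ^ m)"
    unfolding Dp_def P by (simp add: sum.union_disjoint[OF fin _ disj] sum.reindex[OF inj])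
  also have "(\<Sum>S\<in>Pow {..<n}. (-1) ^ (Suc n - card S) * (c + sum l S) ^ m) = - Dp l n c m"
    unfolding Dp_def sum_negf[symmetric]
    by (rule sum.cong) (auto simp: Suc_diff_le cardle)
  also have "(\<Sum>S\<in>Pow {..<n}. (-1) ^ (Suc n - card (insert n S)) * (c + sum l (insert n S)) ^ m)
     = Dp l n (c + l n) m"
    unfolding Dp_def
  proof (rule sum.cong)
    fix S assume S: "S \<in> Pow {..<n}"
    then have "n \<notin> S" "finite S" by (auto intro: finite_subset)
    then show "(-1) ^ (Suc n - card (insert n S)) * (c + sum l (insert n S)) ^ m
        = (-1) ^ (n - card S) * (c + l n + sum l S) ^ m"
      by (simp add: add.assoc)
  qed simp
  finally show ?thesis by simp
qed

lemma Dp_main: "(\<forall>m c. m < n \<longrightarrow> Dp l n c m = 0) \<and> (\<forall>c. Dp l n c n = fact n * (\<Prod>k<n. l k))"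
proof (induction n)
  case 0
  show ?case by (simp add: Dp_def)
next
  case (Suc n)
  then have z: "\<And>m c. m < n \<Longrightarrow> Dp l n c m = 0" and t: "\<And>c. Dp l n c n = fact n * (\<Prod>k<n. l k)"
    by auto
  have A: "Dp l (Suc n) c m = 0" if "m < Suc n" for m c
  proof (cases "m < n")
    case True then show ?thesis by (simp add: Dp_Suc z)
  next
    case False then have "m = n" using that by simp
    then show ?thesis by (simp add: Dp_Suc t)
  qed
  have B: "Dp l (Suc n) c (Suc n) = fact (Suc n) * (\<Prod>k<Suc n. l k)" for c
  proof -
    let ?g = "\<lambda>j. of_nat (Suc n choose j) * ((c + l n) ^ (Suc n - j) - c ^ (Suc n - j)) * Dp l n 0 j"
    have "Dp l (Suc n) c (Suc n) = (\<Sum>j\<le>Suc n. ?g j)"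
      unfolding Dp_Suc Dp_expand[of l n _ "Suc n"] sum_subtractf[symmetric]
      by (rule sum.cong) (simp_all add: left_diff_distrib right_diff_distrib)
    also have "\<dots> = (\<Sum>j\<le>Suc n. if j = n then of_nat (Suc n) * l n * (fact n * (\<Prod>k<n. l k)) else 0)"
    proof (rule sum.cong)
      fix j assume "j \<in> {..Suc n}"
      then consider "j < n" | "j = n" | "j = Suc n" by force
      then show "?g j = (if j = n then of_nat (Suc n) * l n * (fact n * (\<Prod>k<n. l k)) else 0)"
        by cases (simp_all add: z t)
    qed simp
    also have "\<dots> = fact (Suc n) * (\<Prod>k<Suc n. l k)"
      by (simp add: sum.delta)
    finally show ?thesis .
  qed
  show ?case using A B by (auto simp: less_Suc_eq)
qed

lemma polarization:
  fixes l :: "nat \<Rightarrow> real"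
  shows "fact n * (\<Prod>k<n. l k) = (\<Sum>S\<in>Pow {..<n}. (-1) ^ (n - card S) * (sum l S) ^ n)"
proof -
  have "Dp l n 0 n = fact n * (\<Prod>k<n. l k)" using Dp_main[of n l] by blast
  then show ?thesis unfolding Dp_def by simp
qed




lemma sym_dot:
  fixes M :: "real^'n^'n"
  assumes "transpose M = M"
  shows "(M *v x) \<bullet> y = x \<bullet> (M *v y)"
proof -
  have "M *v x = x v* M" using transpose_matrix_vector[of M x] assms by simp
  then show ?thesis by (simp add: dot_lmul_matrix)
qed

lemma eigvec_exists:
  fixes M :: "real^'n^'n" and S :: "(real^'n) set"
  assumes sym: "transpose M = M" and fin: "finite S" and card: "card S < CARD('n)"
    and eig: "\<forall>b\<in>S. \<exists>a. M *v b = a *\<^sub>R b"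
  shows "\<exists>x. norm x = 1 \<and> (\<forall>b\<in>S. b \<bullet> x = 0) \<and> (\<exists>a. M *v x = a *\<^sub>R x)"
proof -
  have "dim S < DIM(real^'n)" using dim_le_card'[OF fin] card by simp
  then obtain z :: "real^'n" where z: "z \<noteq> 0" "\<And>y. y \<in> span S \<Longrightarrow> orthogonal z y"
    using orthogonal_to_subspace_exists by blast
  define T where "T = (\<Inter>b\<in>S. {x::real^'n. b \<bullet> x = 0})"
  define K where "K = sphere (0::real^'n) 1 \<inter> T"
  have cK: "compact K" unfolding K_def T_def
    by (intro compact_Int_closed compact_sphere closed_INT) (simp add: closed_hyperplane)
  have zT: "z /\<^sub>R norm z \<in> K" using z unfolding K_def T_def
    by (auto simp: orthogonal_def span_base inner_commute)
  have cont: "continuous_on K (\<lambda>x. x \<bullet> (M *v x))"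
    by (intro continuous_intros)
  obtain x0 where x0: "x0 \<in> K" and mx: "\<And>y. y \<in> K \<Longrightarrow> y \<bullet> (M *v y) \<le> x0 \<bullet> (M *v x0)"
    using continuous_attains_sup[OF cK _ cont] zT by blast
  have nx0: "norm x0 = 1" and x0T: "\<And>b. b \<in> S \<Longrightarrow> b \<bullet> x0 = 0"
    using x0 unfolding K_def T_def by auto
  define mu where "mu = x0 \<bullet> (M *v x0)"
  define w where "w = M *v x0 - mu *\<^sub>R x0"
  have x0x0: "x0 \<bullet> x0 = 1" using nx0 by (simp add: norm_eq_1)
  have "x0 \<bullet> w = 0" unfolding w_def mu_def
    by (simp add: inner_diff_right x0x0)
  then have wx0: "w \<bullet> x0 = 0" by (simp add: inner_commute)
  have wT: "b \<bullet> w = 0" if b: "b \<in> S" for b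
  proof -
    obtain a where "M *v b = a *\<^sub>R b" using eig b by blast
    then have "b \<bullet> (M *v x0) = 0" using sym_dot[OF sym, of b x0] x0T[OF b] by simp
    then show ?thesis unfolding w_def using x0T[OF b] by (simp add: inner_diff_right)
  qed
  have key: "2 * (w \<bullet> w) \<le> s * (mu * (w \<bullet> w) - w \<bullet> (M *v w))" if s: "s > 0" for s
  proof -
    define zz where "zz = x0 + s *\<^sub>R w"
    have nz: "zz \<bullet> zz = 1 + s^2 * (w \<bullet> w)"
      unfolding zz_def by (simp add: inner_add_left inner_add_right x0x0 wx0 inner_commute power2_eq_square)
    then have zpos: "zz \<bullet> zz > 0" by (simp add: add_pos_nonneg)
    then have zne: "zz \<noteq> 0" by auto
    have "zz /\<^sub>R norm zz \<in> K" unfolding K_def T_def using zne wT x0T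
      by (auto simp: zz_def inner_add_right)
    then have le: "(zz /\<^sub>R norm zz) \<bullet> (M *v (zz /\<^sub>R norm zz)) \<le> mu"
      using mx unfolding mu_def by blast
    have "(zz /\<^sub>R norm zz) \<bullet> (M *v (zz /\<^sub>R norm zz)) = (zz \<bullet> (M *v zz)) / (zz \<bullet> zz)"
      by (simp add: matrix_vector_mult_scaleR power2_norm_eq_inner[symmetric] power2_eq_square divide_inverse)
    with le zpos have le2: "zz \<bullet> (M *v zz) \<le> mu * (zz \<bullet> zz)"
      by (simp add: divide_le_eq)
    have wM: "w \<bullet> (M *v x0) = w \<bullet> w"
    proof -
      have "M *v x0 = w + mu *\<^sub>R x0" by (simp add: w_def)
      then show ?thesis by (simp add: inner_add_right wx0)
    qed
    have Mx0w: "x0 \<bullet> (M *v w) = w \<bullet> w"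
      using sym_dot[OF sym, of x0 w] wM by (simp add: inner_commute)
    have "zz \<bullet> (M *v zz) = mu + 2 * s * (w \<bullet> w) + s^2 * (w \<bullet> (M *v w))"
      unfolding zz_def
      by (simp add: matrix_vector_right_distrib matrix_vector_mult_scaleR inner_add_left inner_add_right
          mu_def[symmetric] wM Mx0w power2_eq_square algebra_simps)
    with le2 nz have "2 * s * (w \<bullet> w) + s^2 * (w \<bullet> (M *v w)) \<le> mu * s^2 * (w \<bullet> w)"
      by (simp add: algebra_simps)
    then have "s * (2 * (w \<bullet> w)) \<le> s * (s * (mu * (w \<bullet> w) - w \<bullet> (M *v w)))"
      by (simp add: power2_eq_square algebra_simps)
    then show ?thesis using s by simp
  qed
  have "w \<bullet> w = 0"
  proof (rule ccontr)
    assume "w \<bullet> w \<noteq> 0"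
    then have W: "w \<bullet> w > 0" by (simp add: order_less_le)
    define B where "B = mu * (w \<bullet> w) - w \<bullet> (M *v w)"
    define s where "s = (w \<bullet> w) / (\<bar>B\<bar> + 1)"
    have s: "s > 0" unfolding s_def using W by (simp add: add_pos_nonneg)
    have "2 * (w \<bullet> w) \<le> s * B" using key[OF s] unfolding B_def .
    also have "s * B \<le> s * \<bar>B\<bar>" using s by (intro mult_left_mono) auto
    also have "\<dots> = (w \<bullet> w) * (\<bar>B\<bar> / (\<bar>B\<bar> + 1))" unfolding s_def by simp
    also have "\<dots> \<le> (w \<bullet> w) * 1" using W by (intro mult_left_mono) (auto simp: divide_simps)
    finally show False using W by simp
  qed
  then have "M *v x0 = mu *\<^sub>R x0" unfolding w_def by simp
  then show ?thesis using nx0 x0T by blast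
qed

lemma orthonormal_eigen_set:
  fixes M :: "real^'n^'n"
  assumes sym: "transpose M = M"
  shows "k \<le> CARD('n) \<Longrightarrow> \<exists>S. finite S \<and> card S = k \<and> (\<forall>x\<in>S. norm x = 1 \<and> (\<exists>a. M *v x = a *\<^sub>R x))
     \<and> (\<forall>x\<in>S. \<forall>y\<in>S. x \<noteq> y \<longrightarrow> x \<bullet> y = 0)"
proof (induction k)
  case 0
  show ?case by (rule exI[of _ "{}"]) simp
next
  case (Suc k)
  then obtain S where S: "finite S" "card S = k" "\<forall>x\<in>S. norm x = 1 \<and> (\<exists>a. M *v x = a *\<^sub>R x)"
    "\<forall>x\<in>S. \<forall>y\<in>S. x \<noteq> y \<longrightarrow> x \<bullet> y = 0" by auto
  obtain x where x: "norm x = 1" "\<forall>b\<in>S. b \<bullet> x = 0" "\<exists>a. M *v x = a *\<^sub>R x"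
    using eigvec_exists[OF sym S(1)] S Suc.prems by auto
  have "x \<notin> S"
  proof
    assume "x \<in> S"
    then have "x \<bullet> x = 0" using x(2) by blast
    then show False using x(1) by simp
  qed
  show ?case
    by (rule exI[of _ "insert x S"]) (use S x \<open>x \<notin> S\<close> in \<open>auto simp: inner_commute\<close>)
qed

lemma spectral:
  fixes M :: "real^'n^'n"
  assumes sym: "transpose M = M"
  obtains R :: "real^'n^'n" and mu :: "real^'n" where "orthogonal_matrix R"
    "M = transpose R ** (\<chi> i j. if i = j then mu $ i else 0) ** R"
proof -
  obtain S where S: "finite S" "card S = CARD('n)" "\<forall>x\<in>S. norm x = 1 \<and> (\<exists>a. M *v x = a *\<^sub>R x)"
    "\<forall>x\<in>S. \<forall>y\<in>S. x \<noteq> y \<longrightarrow> x \<bullet> y = 0"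
    using orthonormal_eigen_set[OF sym order_refl] by blast
  obtain f where f: "bij_betw f (UNIV::'n set) S"
    using finite_same_card_bij[of "UNIV::'n set" S] S by auto
  have fS: "f i \<in> S" for i using f by (auto simp: bij_betw_def)
  have finj: "f i = f j \<Longrightarrow> i = j" for i j using f by (auto simp: bij_betw_def inj_on_def)
  define R :: "real^'n^'n" where "R = (\<chi> i. f i)"
  define mu :: "real^'n" where "mu = (\<chi> i. f i \<bullet> (M *v f i))"
  define D :: "real^'n^'n" where "D = (\<chi> i j. if i = j then mu $ i else 0)"
  have eig: "M *v f i = (mu $ i) *\<^sub>R f i" for i
  proof -
    obtain a where a: "M *v f i = a *\<^sub>R f i" using S(3) fS by blast
    have "f i \<bullet> f i = 1" using S(3) fS by (simp add: norm_eq_1)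
    then have "mu $ i = a" unfolding mu_def using a by simp
    then show ?thesis using a by simp
  qed
  have rowR: "row i R = f i" for i unfolding R_def row_def by (simp add: vec_eq_iff)
  have oR: "orthogonal_matrix R"
    unfolding orthogonal_matrix_orthonormal_rows rowR
    using S(3,4) fS finj by (metis orthogonal_def)
  have RR: "transpose R ** R = mat 1" using oR by (simp add: orthogonal_matrix_def)
  have MR: "M ** transpose R = transpose R ** D"
  proof -
    have "(M ** transpose R) $ a $ i = (transpose R ** D) $ a $ i" for a i
    proof -
      have "(M ** transpose R) $ a $ i = (M *v f i) $ a"
        by (simp add: matrix_matrix_mult_def matrix_vector_mult_def transpose_def R_def)
      also have "\<dots> = mu $ i * f i $ a" by (simp add: eig)
      also have "\<dots> = (transpose R ** D) $ a $ i"
        by (simp add: matrix_matrix_mult_def transpose_def R_def D_def if_distrib[of "\<lambda>t. _ * t"] sum.delta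
            cong: if_cong)
      finally show ?thesis .
    qed
    then show ?thesis by (simp add: vec_eq_iff)
  qed
  have "M = M ** (transpose R ** R)" by (simp add: RR)
  also have "\<dots> = transpose R ** D ** R" by (simp add: matrix_mul_assoc MR)
  finally show ?thesis using that oR unfolding D_def by blast
qed




lemma prod_lin_bij:
  fixes a b :: "'i \<Rightarrow> real"
  assumes "finite A" "finite B" "(\<Prod>i\<in>A. [:- a i, 1:]) = (\<Prod>j\<in>B. [:- b j, 1:])"
  shows "\<exists>f. bij_betw f A B \<and> (\<forall>i\<in>A. b (f i) = a i)"
  using assms
proof (induction A arbitrary: B rule: finite_induct)
  case empty
  have "B = {}"
  proof (rule ccontr)
    assume "B \<noteq> {}"
    then obtain j where j: "j \<in> B" by blast
    have "poly (\<Prod>j\<in>B. [:- b j, 1:]) (b j) = 0"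
      using j empty.prems(1) by (auto simp: poly_prod)
    then show False using empty.prems(2) by simp
  qed
  then show ?case unfolding bij_betw_def by auto
next
  case (insert x A)
  have "poly (\<Prod>j\<in>B. [:- b j, 1:]) (a x) = 0"
    unfolding insert.prems(2)[symmetric] using insert.hyps by (simp add: poly_prod)
  then obtain j where j: "j \<in> B" "b j = a x"
    using insert.prems(1) by (auto simp: poly_prod)
  have "[:- a x, 1:] * (\<Prod>i\<in>A. [:- a i, 1:]) = [:- a x, 1:] * (\<Prod>j\<in>B - {j}. [:- b j, 1:])"
    using insert.prems(2) insert.hyps prod.remove[OF insert.prems(1) j(1), of "\<lambda>j. [:- b j, 1:]"] j(2)
    by simp
  note e0 = this
  have e: "(\<Prod>i\<in>A. [:- a i, 1:]) = (\<Prod>j\<in>B - {j}. [:- b j, 1:])"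
  proof -
    have nz: "[:- a x, 1:] \<noteq> (0::real poly)" by simp
    show ?thesis using mult_left_cancel[OF nz] e0 by blast
  qed
  obtain g where g: "bij_betw g A (B - {j})" "\<forall>i\<in>A. b (g i) = a i"
    using insert.IH[OF _ e] insert.prems(1) by blast
  define f where "f = g(x := j)"
  have "bij_betw f (insert x A) B"
  proof -
    have "bij_betw f A (B - {j})" using g(1) insert.hyps(2) unfolding f_def
      by (metis bij_betw_cong fun_upd_other)
    then have "bij_betw f (insert x A) (insert (f x) (B - {j}))"
      using notIn_Un_bij_betw3[of x A f "B - {j}"] insert.hyps(2) by (simp add: f_def)
    moreover have "insert (f x) (B - {j}) = B" using j(1) by (auto simp: f_def)
    ultimately show ?thesis by simp
  qed
  moreover have "\<forall>i\<in>insert x A. b (f i) = a i" using g(2) j(2) insert.hyps(2)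
    by (auto simp: f_def)
  ultimately show ?case by blast
qed

lemma eigen_perm:
  fixes M :: "real^'n^'n"
  assumes "eigen_list lam M" "eigen_list mu M"
  shows "\<exists>\<pi>. \<pi> permutes (UNIV::'n set) \<and> lam = (\<chi> i. mu $ \<pi> i)"
proof -
  have "poly (\<Prod>i\<in>UNIV. [:- (lam $ i), 1:]) = poly (\<Prod>i\<in>UNIV. [:- (mu $ i), 1:])"
    using assms unfolding eigen_list_def by (auto simp: poly_prod fun_eq_iff)
  then have "(\<Prod>i\<in>UNIV. [:- (lam $ i), 1:]) = (\<Prod>i\<in>UNIV. [:- (mu $ i), 1:])"
    by (simp add: poly_eq_poly_eq_iff)
  then obtain f where f: "bij_betw f (UNIV::'n set) UNIV" "\<forall>i. mu $ f i = lam $ i"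
    using prod_lin_bij[of "UNIV::'n set" UNIV "\<lambda>i. lam $ i" "\<lambda>i. mu $ i"] by auto
  have "f permutes UNIV" using f(1) unfolding permutes_univ bij_betw_def inj_on_def by (metis UNIV_I imageE)
  moreover have "lam = (\<chi> i. mu $ f i)" using f(2) by (simp add: vec_eq_iff)
  ultimately show ?thesis by blast
qed




lemma hs_inner_proj: "hs_inner M (proj z) = z \<bullet> (M *v z)"
proof -
  have "hs_inner M (proj z) = (\<Sum>i\<in>UNIV. \<Sum>k\<in>UNIV. M $ k $ i * (z $ k * z $ i))"
    unfolding hs_inner_def proj_def trace_def by (simp add: matrix_matrix_mult_def transpose_def)
  also have "\<dots> = (\<Sum>k\<in>UNIV. \<Sum>i\<in>UNIV. M $ k $ i * (z $ k * z $ i))" by (rule sum.swap)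
  also have "\<dots> = z \<bullet> (M *v z)"
    by (simp add: inner_vec_def matrix_vector_mult_def sum_distrib_left mult_ac)
  finally show ?thesis .
qed

lemma hs_norm_proj: "hs_norm (proj y) = norm y ^ 2"
proof -
  have pv: "proj y *v y = (y \<bullet> y) *\<^sub>R y"
    by (simp add: proj_def matrix_vector_mult_def inner_vec_def sum_distrib_left mult_ac vec_eq_iff
        power2_eq_square sum_distrib_right)
  have "hs_inner (proj y) (proj y) = (y \<bullet> y)^2"
    by (simp add: hs_inner_proj pv power2_eq_square)
  then show ?thesis unfolding hs_norm_def by (simp add: power2_norm_eq_inner)
qed

lemma sq_prod:
  fixes g :: "nat \<Rightarrow> real" and p :: nat
  shows "(\<Prod>k<p. g k ^ 2) = (\<Prod>k<2*p. g (k div 2))"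
proof (induction p)
  case 0 then show ?case by simp
next
  case (Suc p)
  have e: "2 * Suc p = Suc (Suc (2 * p))" by simp
  show ?case unfolding e using Suc by (simp add: power2_eq_square)
qed

lemma hmu_decomp:
  fixes mu x :: "real^'n"
  shows "(\<Sum>i\<in>UNIV. mu $ i * (x $ i)^2)^p =
    (\<Sum>q\<in>PiE {..<p} (\<lambda>_. UNIV::'n set) \<times> Pow {..<2*p}.
       ((\<Prod>k<p. mu $ (fst q k)) * (-1)^(2*p - card (snd q)) / fact (2*p)) *
       ((\<Sum>k\<in>snd q. axis (fst q (k div 2)) 1) \<bullet> x)^(2*p))"
proof -
  let ?P = "PiE {..<p} (\<lambda>_. UNIV::'n set)"
  have "(\<Sum>i\<in>UNIV. mu $ i * (x $ i)^2)^p = (\<Prod>k<p. \<Sum>i\<in>UNIV. mu $ i * (x $ i)^2)"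
    by simp
  also have "\<dots> = (\<Sum>f\<in>?P. \<Prod>k<p. mu $ f k * (x $ f k)^2)"
    by (rule prod_sum_PiE) auto
  also have "\<dots> = (\<Sum>f\<in>?P. (\<Prod>k<p. mu $ f k) * (\<Prod>k<2*p. (axis (f (k div 2)) 1) \<bullet> x))"
    by (rule sum.cong) (simp_all add: prod.distrib sq_prod inner_axis')
  also have "\<dots> = (\<Sum>f\<in>?P. \<Sum>S\<in>Pow {..<2*p}.
       ((\<Prod>k<p. mu $ f k) * (-1)^(2*p - card S) / fact (2*p)) *
       ((\<Sum>k\<in>S. axis (f (k div 2)) 1) \<bullet> x)^(2*p))"
  proof (rule sum.cong)
    fix f assume "f \<in> ?P"
    let ?l = "\<lambda>k. (axis (f (k div 2)) 1) \<bullet> x"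
    have pol: "fact (2*p) * (\<Prod>k<2*p. ?l k) = (\<Sum>S\<in>Pow {..<2*p}. (-1) ^ (2*p - card S) * (sum ?l S) ^ (2*p))"
      by (rule polarization)
    have "(\<Prod>k<2*p. ?l k) = (\<Sum>S\<in>Pow {..<2*p}. (-1) ^ (2*p - card S) * (sum ?l S) ^ (2*p)) / fact (2*p)"
      using pol by (simp add: field_simps)
    then show "(\<Prod>k<p. mu $ f k) * (\<Prod>k<2*p. ?l k) = (\<Sum>S\<in>Pow {..<2*p}.
       ((\<Prod>k<p. mu $ f k) * (-1)^(2*p - card S) / fact (2*p)) *
       ((\<Sum>k\<in>S. axis (f (k div 2)) 1) \<bullet> x)^(2*p))"
      by (simp add: sum_divide_distrib sum_distrib_left inner_sum_left mult_ac)
  qed simp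
  also have "\<dots> = (\<Sum>q\<in>?P \<times> Pow {..<2*p}.
       ((\<Prod>k<p. mu $ (fst q k)) * (-1)^(2*p - card (snd q)) / fact (2*p)) *
       ((\<Sum>k\<in>snd q. axis (fst q (k div 2)) 1) \<bullet> x)^(2*p))"
    by (subst sum.cartesian_product) (simp add: split_def)
  finally show ?thesis .
qed

lemma norm_orth_vec:
  fixes Q :: "real^'n^'n"
  assumes "orthogonal_matrix Q"
  shows "norm (Q *v v) = norm v"
proof -
  have QQ: "transpose Q ** Q = mat 1" using assms by (simp add: orthogonal_matrix_def)
  have "(Q *v v) \<bullet> (Q *v v) = ((Q *v v) v* Q) \<bullet> v" by (simp add: dot_lmul_matrix)
  also have "(Q *v v) v* Q = v"
    by (metis QQ matrix_vector_mul_assoc matrix_vector_mul_lid transpose_matrix_vector)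
  finally show ?thesis by (simp add: norm_eq)
qed

context grp
begin

lemma span_inv:
  assumes kap: "\<forall>w y. A N w y = \<kappa> * norm w ^ N * norm y ^ N"
    and finJ: "finite J" and R: "orthogonal_matrix R"
  shows "(\<Sum>U\<in>G. \<Sum>j\<in>J. a j * (v j \<bullet> (R *v (U *v y)))^N) = (\<Sum>j\<in>J. a j * \<kappa> * norm (v j)^N) * norm y^N"
proof -
  have "(\<Sum>U\<in>G. \<Sum>j\<in>J. a j * (v j \<bullet> (R *v (U *v y)))^N) = (\<Sum>j\<in>J. \<Sum>U\<in>G. a j * (v j \<bullet> (R *v (U *v y)))^N)"
    by (rule sum.swap)
  also have "\<dots> = (\<Sum>j\<in>J. a j * A N (transpose R *v v j) y)"
  proof (rule sum.cong)
    fix j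
    have "\<And>z. v j \<bullet> (R *v z) = (transpose R *v v j) \<bullet> z"
      by (simp add: dot_lmul_matrix)
    then show "(\<Sum>U\<in>G. a j * (v j \<bullet> (R *v (U *v y)))^N) = a j * A N (transpose R *v v j) y"
      unfolding A_def by (simp add: sum_distrib_left)
  qed simp
  also have "\<dots> = (\<Sum>j\<in>J. a j * \<kappa> * norm (v j)^N) * norm y^N"
    using kap norm_orth_vec[of "transpose R"] R by (simp add: sum_distrib_right sum_distrib_left mult_ac)
  finally show ?thesis .
qed

end




lemma quad_spec:
  fixes R D :: "real^'n^'n"
  assumes "M = transpose R ** (\<chi> i j. if i = j then mu $ i else 0) ** R"
  shows "x \<bullet> (M *v x) = (\<Sum>i\<in>UNIV. mu $ i * ((R *v x) $ i)^2)"
proof -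
  let ?D = "(\<chi> i j. if i = j then mu $ i else 0) :: real^'n^'n"
  have "M *v x = transpose R *v (?D *v (R *v x))" unfolding assms by (simp add: matrix_vector_mul_assoc matrix_mul_assoc)
  moreover have "x \<bullet> (transpose R *v z) = (R *v x) \<bullet> z" for z
    using dot_lmul_matrix[of x "transpose R" z] by simp
  ultimately have "x \<bullet> (M *v x) = (R *v x) \<bullet> (?D *v (R *v x))"
    by simp
  also have "\<dots> = (\<Sum>i\<in>UNIV. mu $ i * ((R *v x) $ i)^2)"
    by (simp add: inner_vec_def matrix_vector_mult_def if_distrib[of "\<lambda>t. t * _"] sum.delta power2_eq_square mult_ac
        cong: if_cong)
  finally show ?thesis .
qed

lemma eigen_spec:
  fixes R :: "real^'n^'n"
  assumes R: "orthogonal_matrix R" and M: "M = transpose R ** (\<chi> i j. if i = j then mu $ i else 0) ** R"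
  shows "eigen_list mu M"
  unfolding eigen_list_def
proof
  fix t :: real
  let ?D = "(\<chi> i j. if i = j then mu $ i else 0) :: real^'n^'n"
  have RR: "transpose R ** R = mat 1" using R by (simp add: orthogonal_matrix_def)
  have e: "t *\<^sub>R mat 1 - M = transpose R ** (t *\<^sub>R mat 1 - ?D) ** R"
  proof -
    have "(t *\<^sub>R mat 1 - M) *v x = (transpose R ** (t *\<^sub>R mat 1 - ?D) ** R) *v x" for x
    proof -
      have "(transpose R ** (t *\<^sub>R mat 1 - ?D) ** R) *v x = transpose R *v ((t *\<^sub>R mat 1 - ?D) *v (R *v x))"
        by (simp add: matrix_vector_mul_assoc matrix_mul_assoc)
      also have "\<dots> = t *\<^sub>R x - M *v x"
      proof -
        have a1: "(t *\<^sub>R mat 1 - ?D) *v z = t *\<^sub>R z - ?D *v z" for z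
          by (simp add: matrix_vector_mult_diff_rdistrib scaleR_matrix_vector_assoc[symmetric])
        have a2: "transpose R *v (R *v x) = x" by (simp add: matrix_vector_mul_assoc RR)
        have a3: "transpose R *v (?D *v (R *v x)) = M *v x"
          unfolding M by (simp add: matrix_vector_mul_assoc matrix_mul_assoc)
        show ?thesis unfolding a1 matrix_vector_mult_diff_distrib matrix_vector_mult_scaleR a2 a3 ..
      qed
      also have "\<dots> = (t *\<^sub>R mat 1 - M) *v x"
        by (simp add: matrix_vector_mult_diff_rdistrib scaleR_matrix_vector_assoc[symmetric])
      finally show ?thesis by simp
    qed
    then show ?thesis by (simp add: matrix_eq)
  qed
  have "det (t *\<^sub>R mat 1 - M) = det (transpose R) * det (t *\<^sub>R mat 1 - ?D) * det R"
    unfolding e by (simp add: det_mul)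
  also have "\<dots> = det (t *\<^sub>R mat 1 - ?D) * det (transpose R ** R)"
    by (simp add: det_mul)
  also have "\<dots> = (\<Prod>i\<in>UNIV. t - mu $ i)"
    by (simp add: RR det_diagonal mat_def)
  finally show "det (t *\<^sub>R mat 1 - M) = (\<Prod>i\<in>UNIV. t - mu $ i)" .
qed

lemma perm_matrix_orth:
  assumes "\<pi> permutes (UNIV::'n set)"
  shows "orthogonal_matrix ((\<chi> j k. if k = inv \<pi> j then 1 else 0) :: real^'n^'n)"
proof -
  have inj: "inj (inv \<pi>)" using assms permutes_inv permutes_inj by blast
  have r: "row j ((\<chi> j k. if k = inv \<pi> j then 1 else 0) :: real^'n^'n) = axis (inv \<pi> j) 1" for j
    by (simp add: row_def axis_def vec_eq_iff eq_commute)
  show ?thesis unfolding orthogonal_matrix_orthonormal_rows r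
    using inj by (auto simp: orthogonal_def inner_axis_axis inj_def)
qed

theorem theorem3p2:
  fixes G :: "(real^'n^'n) set" and p :: nat
  assumes finG: "finite G"
    and orth: "\<forall>U\<in>G. orthogonal_matrix U"
    and nonempty: "G \<noteq> {}"
    and mult_closed: "\<forall>A\<in>G. \<forall>B\<in>G. A ** B \<in> G"
    and inv_closed: "\<forall>A\<in>G. matrix_inv A \<in> G"
    and p1: "p \<ge> 1"
    and inv_hyp: "\<forall>f. hom_poly (2*p) f \<and> (\<forall>U\<in>G. \<forall>x. f (U *v x) = f x)
                   \<longrightarrow> (\<exists>c. \<forall>x. f x = c * norm x ^ (2*p))"
  shows "\<exists>F. hom_poly p F \<and> symmetric_fun F \<and>
           (\<forall>M lam y. symmetric_mat M \<and> eigen_list lam M \<longrightarrow>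
              (1 / real (card G)) * (\<Sum>U\<in>G. (hs_inner M (proj (U *v y))) ^ p)
                = F lam * hs_norm (proj y) ^ p
            \<and> F lam * hs_norm (proj y) ^ p = F lam * norm y ^ (2*p))"
proof -
  interpret grp G using finG orth mult_closed inv_closed by unfold_locales
  obtain \<kappa> where kap: "\<forall>w y. A (2*p) w y = \<kappa> * norm w ^ (2*p) * norm y ^ (2*p)"
    using K[of "2*p"] inv_hyp by blast
  define J where "J = PiE {..<p} (\<lambda>_. UNIV::'n set) \<times> Pow {..<2*p}"
  define a where "a = (\<lambda>(mu::real^'n) (q::(nat \<Rightarrow> 'n) \<times> nat set).
     ((\<Prod>k<p. mu $ (fst q k)) * (-1)^(2*p - card (snd q)) / fact (2*p)))"
  define v where "v = (\<lambda>q::(nat \<Rightarrow> 'n) \<times> nat set. (\<Sum>k\<in>snd q. axis (fst q (k div 2)) 1) :: real^'n)"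
  define C where "C = (\<lambda>mu. \<Sum>q\<in>J. a mu q * \<kappa> * norm (v q) ^ (2*p))"
  have finJ: "finite J" unfolding J_def by (intro finite_cartesian_product finite_PiE) auto
  have core: "(\<Sum>U\<in>G. (\<Sum>i\<in>UNIV. mu $ i * ((R *v (U *v y)) $ i)^2)^p) = C mu * norm y ^ (2*p)"
    if R: "orthogonal_matrix R" for mu R y
  proof -
    have "(\<Sum>U\<in>G. (\<Sum>i\<in>UNIV. mu $ i * ((R *v (U *v y)) $ i)^2)^p)
        = (\<Sum>U\<in>G. \<Sum>q\<in>J. a mu q * (v q \<bullet> (R *v (U *v y)))^(2*p))"
      unfolding J_def a_def v_def by (simp add: hmu_decomp)
    also have "\<dots> = C mu * norm y ^ (2*p)"
      unfolding C_def by (rule span_inv[OF kap finJ R])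
    finally show ?thesis .
  qed
  define e0 where "e0 = (axis undefined 1 :: real^'n)"
  have ne0: "norm e0 = 1" unfolding e0_def by simp
  define F where "F = (\<lambda>x::real^'n. (1 / real (card G)) * (\<Sum>U\<in>G. (\<Sum>i\<in>UNIV. x $ i * ((U *v e0) $ i)^2)^p))"
  have FC: "F mu = C mu / real (card G)" for mu
    using core[OF orthogonal_matrix_id, of mu e0] ne0 unfolding F_def by simp
  have hpF: "hom_poly p F"
  proof -
    have "hom_poly p (\<lambda>x::real^'n. \<Sum>U\<in>G. (\<Sum>i\<in>UNIV. ((U *v e0) $ i)^2 * x $ i)^p)"
    proof (rule hp_sum[OF finG])
      fix U :: "real^'n^'n"
      show "hom_poly p (\<lambda>x::real^'n. (\<Sum>i\<in>UNIV. ((U *v e0) $ i)^2 * x $ i)^p)"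
        using hp_pow[OF hp_lin[of "\<lambda>i. ((U *v e0) $ i)^2"], of p] by simp
    qed
    then have "hom_poly p (\<lambda>x::real^'n. (1 / real (card G)) * (\<Sum>U\<in>G. (\<Sum>i\<in>UNIV. ((U *v e0) $ i)^2 * x $ i)^p))"
      by (rule hp_scale)
    then show ?thesis unfolding F_def by (simp add: mult.commute)
  qed
  have symF: "symmetric_fun F"
    unfolding symmetric_fun_def
  proof (intro allI impI)
    fix \<pi> :: "'n \<Rightarrow> 'n" and x :: "real^'n"
    assume pi: "\<pi> permutes UNIV"
    define P :: "real^'n^'n" where "P = (\<chi> j k. if k = inv \<pi> j then 1 else 0)"
    have oP: "orthogonal_matrix P" unfolding P_def by (rule perm_matrix_orth[OF pi])
    have Pz: "(P *v z) $ j = z $ inv \<pi> j" for z j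
      by (simp add: P_def matrix_vector_mult_def if_distrib[of "\<lambda>t. t * _"] sum.delta cong: if_cong)
    have pinv: "inv \<pi> permutes UNIV" using permutes_inv[OF pi] .
    have s: "(\<Sum>i\<in>UNIV. (\<chi> i. x $ \<pi> i) $ i * (z $ i)^2) = (\<Sum>j\<in>UNIV. x $ j * ((P *v z) $ j)^2)" for z
    proof -
      have "(\<Sum>i\<in>UNIV. (\<chi> i. x $ \<pi> i) $ i * (z $ i)^2) = (\<Sum>i\<in>UNIV. x $ \<pi> i * (z $ i)^2)" by simp
      also have "\<dots> = (\<Sum>j\<in>UNIV. x $ \<pi> (inv \<pi> j) * (z $ inv \<pi> j)^2)"
        using sum.permute[OF pinv, of "\<lambda>i. x $ \<pi> i * (z $ i)^2"] by (simp add: comp_def)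
      also have "\<dots> = (\<Sum>j\<in>UNIV. x $ j * ((P *v z) $ j)^2)"
        by (simp add: Pz permutes_inverses(1)[OF pi])
      finally show ?thesis .
    qed
    have "F (\<chi> i. x $ \<pi> i) = (1 / real (card G)) * (\<Sum>U\<in>G. (\<Sum>j\<in>UNIV. x $ j * ((P *v (U *v e0)) $ j)^2)^p)"
      unfolding F_def s ..
    also have "\<dots> = C x / real (card G)" using core[OF oP, of x e0] ne0 by simp
    also have "\<dots> = F x" by (simp add: FC)
    finally show "F (\<chi> i. x $ \<pi> i) = F x" .
  qed
  show ?thesis
  proof (intro exI[of _ F] conjI hpF symF allI impI)
    fix M :: "real^'n^'n" and lam y :: "real^'n"
    assume H: "symmetric_mat M \<and> eigen_list lam M"
    then have sym: "transpose M = M" and el: "eigen_list lam M" by (auto simp: symmetric_mat_def)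
    obtain R mu where R: "orthogonal_matrix R" and MR: "M = transpose R ** (\<chi> i j. if i = j then mu $ i else 0) ** R"
      using spectral[OF sym] by blast
    have elmu: "eigen_list mu M" by (rule eigen_spec[OF R MR])
    obtain \<pi> where pi: "\<pi> permutes UNIV" and lampi: "lam = (\<chi> i. mu $ \<pi> i)"
      using eigen_perm[OF el elmu] by blast
    have Flam: "F lam = F mu" using symF pi lampi unfolding symmetric_fun_def by simp
    have hsn: "hs_norm (proj y) ^ p = norm y ^ (2*p)" by (simp add: hs_norm_proj power_mult)
    have "(1 / real (card G)) * (\<Sum>U\<in>G. (hs_inner M (proj (U *v y))) ^ p)
        = (1 / real (card G)) * (\<Sum>U\<in>G. (\<Sum>i\<in>UNIV. mu $ i * ((R *v (U *v y)) $ i)^2)^p)"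
      by (simp add: hs_inner_proj quad_spec[OF MR])
    also have "\<dots> = F lam * hs_norm (proj y) ^ p"
      using core[OF R, of mu y] by (simp add: Flam FC[of mu] hsn)
    finally show "(1 / real (card G)) * (\<Sum>U\<in>G. (hs_inner M (proj (U *v y))) ^ p) = F lam * hs_norm (proj y) ^ p" .
    show "F lam * hs_norm (proj y) ^ p = F lam * norm y ^ (2*p)" by (simp add: hsn)
  qed
qed



end
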